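(* Let $\Omega=[-r,r]$, let $s>0$ and let $K$ satisfy the hypotheses (iii) or (iv) listed in the context (with this $s$). Let $\Omega_1,\dots,\Omega_N\subset\Omega$ be pairwise disjoint intervals with ${\rm diam}(\Omega_j)>4+2s$ for each $j$ and ${\rm dist}(\Omega_j,\Omega_k)>2$ for $j\neq k$. Then for every choice of signs $i_1,\dots,i_N\in\{-1,1\}$ there exists a stationary solution $u\in L^2(\Omega)$ of $u_t=-u+f(Tu)$ (i.e. $u=f(Tu)$ a.e.) such that $u|_{\Omega_j}\equiv i_j$ for every $j$.
   Context: $K:\mathbb{R}\to\mathbb{R}$ is bounded and even; $K_+=\max(K,0)$, $K_-=\max(-K,0)$. Hypothesis (iii): ${\rm supp}(K_+)=[-2,2]$, ${\rm supp}(K_-)=[-2-s,-2]\cup[2,2+s]$, $K_+$ nonincreasing on $(0,\infty)$, $\int_0^2K_+\ge1+\int_{\mathbb{R}}K_-$. Hypothesis (iv): same supports, $K_+$ nonincreasing on $(0,\infty)$, $\int_0^2K_+\ge1+\int_2^{2+s}K_-$, and $\int_0^xK_+\ge\int_2^{2+x}K_-$ for all $x\in[0,2]$. $f$ is the saturation function $f(x)=1$ for $x>1$, $f(x)=x$ for $x\in[-1,1]$, $f(x)=-1$ for $x<-1$. For $u\in L^2(\Omega)$, $Tu(x)=\int_{\mathbb{R}}K(x-y)\widetilde u(y)\,dy$ for $x\in\Omega$, where $\widetilde u$ is the extension of $u$ by $0$ outside $\Omega$. *)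

theory Defs
  imports "HOL-Analysis.Analysis"
begin

definition posp :: "(real \<Rightarrow> real) \<Rightarrow> real \<Rightarrow> real" where
  "posp K x = max (K x) 0"

definition negp :: "(real \<Rightarrow> real) \<Rightarrow> real \<Rightarrow> real" where
  "negp K x = max (- K x) 0"

definition supp :: "(real \<Rightarrow> real) \<Rightarrow> real set" where
  "supp g = closure {x. g x \<noteq> 0}"

definition hyp_iii :: "(real \<Rightarrow> real) \<Rightarrow> real \<Rightarrow> bool" where
  "hyp_iii K s \<longleftrightarrow>
     supp (posp K) = {-2..2} \<and>
     supp (negp K) = {-2-s..-2} \<union> {2..2+s} \<and>
     antimono_on {0<..} (posp K) \<and>
     (LBINT x=0..2. posp K x) \<ge> 1 + (LBINT x. negp K x)"

definition hyp_iv :: "(real \<Rightarrow> real) \<Rightarrow> real \<Rightarrow> bool" where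
  "hyp_iv K s \<longleftrightarrow>
     supp (posp K) = {-2..2} \<and>
     supp (negp K) = {-2-s..-2} \<union> {2..2+s} \<and>
     antimono_on {0<..} (posp K) \<and>
     (LBINT x=0..2. posp K x) \<ge> 1 + (LBINT x=2..2+s. negp K x) \<and>
     (\<forall>x\<in>{0..2}. (LBINT y=0..x. posp K y) \<ge> (LBINT y=2..2+x. negp K y))"

definition sat :: "real \<Rightarrow> real" where
  "sat x = (if x > 1 then 1 else if x < -1 then -1 else x)"

definition Top :: "(real \<Rightarrow> real) \<Rightarrow> real set \<Rightarrow> (real \<Rightarrow> real) \<Rightarrow> real \<Rightarrow> real" where
  "Top K \<Omega> u x = (LINT y|lborel. K (x - y) * indicator \<Omega> y * u y)"

definition L2_on :: "real set \<Rightarrow> (real \<Rightarrow> real) \<Rightarrow> bool" where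
  "L2_on \<Omega> u \<longleftrightarrow> set_borel_measurable lborel \<Omega> u \<and>
      set_integrable lborel \<Omega> (\<lambda>x. (u x)\<^sup>2)"

end

theory Submission
  imports Defs
begin


lemma sat_eq: "sat x = max (-1) (min 1 x)"
  unfolding sat_def by auto

lemma sat_mono: "x \<le> y \<Longrightarrow> sat x \<le> sat y"
  unfolding sat_eq by auto

lemma sat_bd: "\<bar>sat x\<bar> \<le> 1"
  unfolding sat_eq by auto

lemma sat_odd: "sat (- x) = - sat x"
  unfolding sat_def by auto

lemma sat_cont: "continuous_on UNIV sat"
  unfolding sat_eq[abs_def] by (intro continuous_intros)

lemma sat_tendsto: "(f \<longlongrightarrow> l) F \<Longrightarrow> ((\<lambda>n. sat (f n)) \<longlongrightarrow> sat l) F"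
  unfolding sat_eq by (intro tendsto_intros)

lemma sat_meas[measurable]: "sat \<in> borel_measurable borel"
  unfolding sat_eq[abs_def] by measurable

lemma sat_one: "c \<ge> 1 \<Longrightarrow> sat c = 1" and sat_mone: "c \<le> -1 \<Longrightarrow> sat c = -1"
  unfolding sat_def by auto

locale kern =
  fixes K :: "real \<Rightarrow> real" and s B :: real
  assumes K_meas[measurable]: "K \<in> borel_measurable borel"
    and K_bd: "\<And>x. \<bar>K x\<bar> \<le> B"
    and K_even: "\<And>x. K (- x) = K x"
    and s_pos: "s > 0"
    and K_pos: "\<And>x. \<bar>x\<bar> < 2 \<Longrightarrow> negp K x = 0"
    and K_neg: "\<And>x. \<bar>x\<bar> > 2 \<Longrightarrow> posp K x = 0"
    and K_zero: "\<And>x. \<bar>x\<bar> > 2 + s \<Longrightarrow> K x = 0"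
    and K_mono: "\<And>x y. 0 < x \<Longrightarrow> x \<le> y \<Longrightarrow> posp K y \<le> posp K x"
begin

lemma K_split: "K x = posp K x - negp K x"
  by (simp add: posp_def negp_def)

lemma posp_nn: "posp K x \<ge> 0" and negp_nn: "negp K x \<ge> 0"
  by (auto simp: posp_def negp_def)

lemma posp_meas[measurable]: "posp K \<in> borel_measurable borel"
  unfolding posp_def by measurable
lemma negp_meas[measurable]: "negp K \<in> borel_measurable borel"
  unfolding negp_def by measurable

lemma B_nn: "B \<ge> 0" using K_bd[of 0] by simp

lemma int_K: "integrable lborel K"
proof -
  have i: "integrable lborel (\<lambda>x. B * indicator {-2-s..2+s} x)"
    by (intro integrable_mult_right) (simp add: integrable_indicator_iff emeasure_lborel_Icc_eq)
  have "AE x in lborel. norm (K x) \<le> norm (B * indicator {- 2 - s..2 + s} x :: real)"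
  proof (rule AE_I2)
    fix x show "norm (K x) \<le> norm (B * indicator {- 2 - s..2 + s} x :: real)"
    proof (cases "x \<in> {- 2 - s..2 + s}")
      case True then show ?thesis using K_bd[of x] by simp
    next
      case False then have "\<bar>x\<bar> > 2 + s" by auto
      then show ?thesis using K_zero[of x] by simp
    qed
  qed
  then show ?thesis using Bochner_Integration.integrable_bound[OF i, of K] by simp
qed

lemma int_Kg:
  assumes c: "c \<noteq> 0" and g[measurable]: "g \<in> borel_measurable borel" and gb: "\<And>t. \<bar>g t\<bar> \<le> M"
  shows "integrable lborel (\<lambda>t. K (a + c * t) * g t)"
proof -
  have i: "integrable lborel (\<lambda>t. K (a + c * t))"
    using lborel_integrable_real_affine[OF int_K c] by simp
  have "integrable lborel (\<lambda>t. M * K (a + c * t))" using i by simp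
  moreover have "AE x in lborel. norm (K (a + c * x) * g x) \<le> norm (M * K (a + c * x))"
  proof (rule AE_I2)
    fix x
    have "\<bar>g x\<bar> \<le> \<bar>M\<bar>" using gb[of x] by simp
    then show "norm (K (a + c * x) * g x) \<le> norm (M * K (a + c * x))"
      by (simp add: abs_mult) (metis abs_ge_zero mult.commute mult_left_mono)
  qed
  ultimately show ?thesis using Bochner_Integration.integrable_bound[of lborel "\<lambda>t. M * K (a + c * t)" "\<lambda>t. K (a + c * t) * g t"] by simp
qed


lemma lint_shift: "(LINT y|lborel. f y) = (LINT t|lborel. f (a + t))" for f :: "real \<Rightarrow> real"
  using lborel_integral_real_affine[of 1 f a] by simp

lemma lint_refl: "(LINT y|lborel. f y) = (LINT t|lborel. f (- t))" for f :: "real \<Rightarrow> real"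
  using lborel_integral_real_affine[of "-1" f 0] by simp

lemma int_Kg_minus:
  assumes g: "g \<in> borel_measurable borel" and gb: "\<And>t. \<bar>g t\<bar> \<le> M"
  shows "integrable lborel (\<lambda>t. K (a - t) * g t)"
  using int_Kg[of "-1" g M a] g gb by simp

lemma int_Kg_plus:
  assumes g: "g \<in> borel_measurable borel" and gb: "\<And>t. \<bar>g t\<bar> \<le> M"
  shows "integrable lborel (\<lambda>t. K (a + t) * g t)"
  using int_Kg[of "1" g M a] g gb by simp

lemma K_nonneg: "\<bar>t\<bar> < 2 \<Longrightarrow> K t \<ge> 0"
  using K_pos[of t] K_split[of t] posp_nn[of t] by simp

lemma K_nonpos: "\<bar>t\<bar> > 2 \<Longrightarrow> K t \<le> 0"
  using K_neg[of t] K_split[of t] negp_nn[of t] by simp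

lemma K_pw: assumes "0 < t" "t \<le> t'" "t < 2" shows "K t' \<le> K t"
proof -
  have "K t = posp K t" using K_pos[of t] K_split[of t] assms by simp
  moreover have "K t' \<le> posp K t'" using K_split[of t'] negp_nn[of t'] by simp
  moreover have "posp K t' \<le> posp K t" using K_mono assms by simp
  ultimately show ?thesis by simp
qed

lemma K_ge_negp: "K t \<ge> - negp K t"
  using K_split[of t] posp_nn[of t] by simp

definition model :: "(real \<Rightarrow> real) \<Rightarrow> real \<Rightarrow> real" where
  "model \<psi> y = (if y \<le> -1 then 1 else if y \<ge> 1 then -1 else if y > 0 then \<psi> y
                 else if y < 0 then - \<psi> (- y) else 0)"

definition TM :: "(real \<Rightarrow> real) \<Rightarrow> real \<Rightarrow> real" where
  "TM \<psi> x = (LINT y|lborel. K (x - y) * model \<psi> y)"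

lemma model_meas[measurable]:
  assumes [measurable]: "\<psi> \<in> borel_measurable borel"
  shows "model \<psi> \<in> borel_measurable borel"
proof -
  have [measurable]: "(\<lambda>y. \<psi> (- y)) \<in> borel_measurable borel" by measurable
  show ?thesis unfolding model_def[abs_def] by measurable
qed

lemma model_bd: "(\<And>y. \<bar>\<psi> y\<bar> \<le> 1) \<Longrightarrow> \<bar>model \<psi> y\<bar> \<le> 1"
  unfolding model_def by auto

lemma model_odd: "model \<psi> (- y) = - model \<psi> y"
  unfolding model_def by auto

lemma model_decomp:
  "model \<psi> y = model (\<lambda>_. 0) y + indicator {0<..<1} y * \<psi> y - indicator {0<..<1} (- y) * \<psi> (- y)"
  unfolding model_def by (auto simp: indicator_def)

lemma TM_decomp:
  assumes [measurable]: "\<psi> \<in> borel_measurable borel" and b: "\<And>y. \<bar>\<psi> y\<bar> \<le> 1"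
  shows "TM \<psi> x = TM (\<lambda>_. 0) x + (LINT y|lborel. (K (x - y) - K (x + y)) * (indicator {0<..<1} y * \<psi> y))"
proof -
  define g where "g y = indicator {0<..<1} y * \<psi> y" for y
  have gm[measurable]: "g \<in> borel_measurable borel" unfolding g_def by measurable
  have gb: "\<bar>g y\<bar> \<le> 1" for y using b[of y] by (auto simp: g_def indicator_def)
  have gm2[measurable]: "(\<lambda>y. g (- y)) \<in> borel_measurable borel" by measurable
  have m0b: "\<bar>model (\<lambda>_. 0) y\<bar> \<le> 1" for y by (rule model_bd) simp
  have "TM \<psi> x = (LINT y|lborel. K (x - y) * model (\<lambda>_. 0) y + K (x - y) * g y - K (x - y) * g (- y))"
    unfolding TM_def by (subst model_decomp) (simp add: g_def algebra_simps)
  also have "\<dots> = (LINT y|lborel. K (x - y) * model (\<lambda>_. 0) y) + (LINT y|lborel. K (x - y) * g y)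
      - (LINT y|lborel. K (x - y) * g (- y))"
    using int_Kg_minus[of "model (\<lambda>_. 0)" 1 x] int_Kg_minus[of g 1 x] int_Kg_minus[of "\<lambda>y. g (- y)" 1 x] m0b gb
    by (simp add: integral_add integral_diff)
  also have "(LINT y|lborel. K (x - y) * g (- y)) = (LINT y|lborel. K (x + y) * g y)"
    by (subst lint_refl) simp
  also have "(LINT y|lborel. K (x - y) * model (\<lambda>_. 0) y) + (LINT y|lborel. K (x - y) * g y) - (LINT y|lborel. K (x + y) * g y)
      = (LINT y|lborel. K (x - y) * model (\<lambda>_. 0) y) + (LINT y|lborel. (K (x - y) - K (x + y)) * g y)"
    using int_Kg_minus[of g 1 x] int_Kg_plus[of g 1 x] gb
    by (simp add: integral_diff[symmetric] left_diff_distrib)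
  finally show ?thesis unfolding TM_def g_def by simp
qed

lemma TM_mono:
  assumes [measurable]: "\<psi> \<in> borel_measurable borel" "\<psi>' \<in> borel_measurable borel"
    and b: "\<And>y. \<bar>\<psi> y\<bar> \<le> 1" "\<And>y. \<bar>\<psi>' y\<bar> \<le> 1"
    and le: "\<And>y. 0 < y \<Longrightarrow> y < 1 \<Longrightarrow> \<psi> y \<le> \<psi>' y"
    and x: "0 < x" "x < 1"
  shows "TM \<psi> x \<le> TM \<psi>' x"
proof -
  have i: "integrable lborel (\<lambda>y. (K (x - y) - K (x + y)) * (indicator {0<..<1} y * f y))"
    if [measurable]: "f \<in> borel_measurable borel" and fb: "\<And>y. \<bar>f y\<bar> \<le> 1" for f
  proof -
    have gb: "\<bar>indicator {0<..<1} y * f y\<bar> \<le> 1" for y using fb[of y] by (auto simp: indicator_def)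
    show ?thesis using int_Kg_minus[of "\<lambda>y. indicator {0<..<1} y * f y" 1 x] int_Kg_plus[of "\<lambda>y. indicator {0<..<1} y * f y" 1 x] gb
      by (simp add: left_diff_distrib)
  qed
  have "(LINT y|lborel. (K (x - y) - K (x + y)) * (indicator {0<..<1} y * \<psi> y))
     \<le> (LINT y|lborel. (K (x - y) - K (x + y)) * (indicator {0<..<1} y * \<psi>' y))"
  proof (rule integral_mono_AE)
    show "integrable lborel (\<lambda>y. (K (x - y) - K (x + y)) * (indicator {0<..<1} y * \<psi> y))" using i b by simp
    show "integrable lborel (\<lambda>y. (K (x - y) - K (x + y)) * (indicator {0<..<1} y * \<psi>' y))" using i b by simp
    have "AE y in lborel. y \<noteq> x" by (rule AE_lborel_singleton[THEN AE_mp]) auto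
    then show "AE y in lborel. (K (x - y) - K (x + y)) * (indicator {0<..<1} y * \<psi> y)
        \<le> (K (x - y) - K (x + y)) * (indicator {0<..<1} y * \<psi>' y)"
    proof (rule AE_mp, intro AE_I2 impI)
      fix y assume "y \<noteq> x"
      show "(K (x - y) - K (x + y)) * (indicator {0<..<1} y * \<psi> y)
        \<le> (K (x - y) - K (x + y)) * (indicator {0<..<1} y * \<psi>' y)"
      proof (cases "0 < y \<and> y < 1")
        case True
        have "K (x - y) = K \<bar>x - y\<bar>" using K_even[of "x - y"] by (cases "x \<le> y") (auto simp: abs_if)
        moreover have "K (x + y) \<le> K \<bar>x - y\<bar>"
          using K_pw[of "\<bar>x - y\<bar>" "x + y"] \<open>y \<noteq> x\<close> True x by auto
        ultimately have "0 \<le> K (x - y) - K (x + y)" by simp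
        then show ?thesis using True le[of y] by (simp add: mult_left_mono)
      qed simp
    qed
  qed
  then show ?thesis using TM_decomp[of \<psi> x] TM_decomp[of \<psi>' x] b by simp
qed


lemma model0: "model (\<lambda>_. 0) y = indicator {..-1} y - indicator {1..} y"
  unfolding model_def by (auto simp: indicator_def)

lemma TM0_nonpos:
  assumes x: "0 < x" "x < 1"
  shows "TM (\<lambda>_. 0) x \<le> 0"
proof -
  have ib: "\<bar>indicator A y :: real\<bar> \<le> 1" for A y by (auto simp: indicator_def)
  have e1: "(LINT y|lborel. K (x - y) * indicator {..-1} y) = (LINT u|lborel. K (0 + u) * indicator {1+x..} u)"
    by (subst lint_refl, subst lint_shift[where a="-x"], rule Bochner_Integration.integral_cong) (auto simp: indicator_def)
  have e2: "(LINT y|lborel. K (x - y) * indicator {1..} y) = (LINT u|lborel. K (0 + u) * indicator {1-x..} u)"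
  proof (subst lint_shift[where a="x"], rule Bochner_Integration.integral_cong)
    fix u show "K (x - (x + u)) * indicator {1..} (x + u) = K (0 + u) * indicator {1 - x..} u"
      using K_even[of u] by (auto simp: indicator_def)
  qed simp
  have "TM (\<lambda>_. 0) x = (LINT y|lborel. K (x - y) * indicator {..-1} y) - (LINT y|lborel. K (x - y) * indicator {1..} y)"
    unfolding TM_def model0 using int_Kg_minus[of "indicator {..-1}" 1 x] int_Kg_minus[of "indicator {1..}" 1 x] ib
    by (simp add: right_diff_distrib integral_diff)
  also have "\<dots> = (LINT u|lborel. K (0 + u) * (indicator {1+x..} u - indicator {1-x..} u))"
    unfolding e1 e2 using int_Kg_plus[of "indicator {1+x..}" 1 0] int_Kg_plus[of "indicator {1-x..}" 1 0] ib
    by (simp add: right_diff_distrib integral_diff)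
  also have "\<dots> \<le> 0"
  proof -
    have "0 \<le> (LINT u|lborel. - (K (0 + u) * (indicator {1+x..} u - indicator {1-x..} u)))"
    proof (rule integral_nonneg_AE, rule AE_I2)
      fix u show "0 \<le> - (K (0 + u) * (indicator {1+x..} u - indicator {1-x..} u))"
      proof (cases "1 - x \<le> u \<and> u < 1 + x")
        case True then have "K u \<ge> 0" using x by (intro K_nonneg) auto
        then show ?thesis using True by (auto simp: indicator_def)
      next
        case False then show ?thesis using x by (auto simp: indicator_def)
      qed
    qed
    then show ?thesis by simp
  qed
  finally show ?thesis .
qed

lemma TM_odd: "TM \<psi> (- x) = - TM \<psi> x"
proof -
  have "TM \<psi> (- x) = (LINT t|lborel. K (- x - - t) * model \<psi> (- t))"
    unfolding TM_def by (rule lint_refl)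
  also have "\<dots> = (LINT t|lborel. - (K (x - t) * model \<psi> t))"
    using K_even[of "x - t" for t] by (simp add: model_odd)
  finally show ?thesis unfolding TM_def by simp
qed


lemma TM_meas[measurable]:
  assumes [measurable]: "\<psi> \<in> borel_measurable borel"
  shows "TM \<psi> \<in> borel_measurable borel"
  unfolding TM_def[abs_def] by measurable

primrec psi :: "nat \<Rightarrow> real \<Rightarrow> real" where
  "psi 0 = (\<lambda>_. 0)"
| "psi (Suc n) = (\<lambda>x. if 0 < x \<and> x < 1 then sat (TM (psi n) x) else 0)"

lemma psi_basic: "psi n \<in> borel_measurable borel \<and> (\<forall>x. \<bar>psi n x\<bar> \<le> 1)"
proof (induction n)
  case 0 then show ?case by simp
next
  case (Suc n)
  then have [measurable]: "psi n \<in> borel_measurable borel" by simp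
  have "psi (Suc n) \<in> borel_measurable borel" by simp
  moreover have "\<forall>x. \<bar>psi (Suc n) x\<bar> \<le> 1" using sat_bd by simp
  ultimately show ?case by simp
qed

lemma psi_meas[measurable]: "psi n \<in> borel_measurable borel"
  and psi_bd: "\<bar>psi n x\<bar> \<le> 1"
  using psi_basic[of n] by auto

lemma psi_dec: "psi (Suc n) x \<le> psi n x"
proof (induction n arbitrary: x)
  case 0
  show ?case
  proof (cases "0 < x \<and> x < 1")
    case True
    then have "sat (TM (\<lambda>_. 0) x) \<le> sat 0" using TM0_nonpos by (intro sat_mono) auto
    then show ?thesis using True by (simp add: sat_def)
  qed auto
next
  case (Suc n)
  show ?case
  proof (cases "0 < x \<and> x < 1")
    case True
    have "TM (psi (Suc n)) x \<le> TM (psi n) x"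
      by (rule TM_mono[OF psi_meas psi_meas psi_bd psi_bd Suc.IH]) (use True in auto)
    then show ?thesis using True by (simp add: sat_mono)
  qed auto
qed

lemma psi_conv: "\<exists>L. (\<lambda>n. psi n x) \<longlonglongrightarrow> L"
proof -
  have "decseq (\<lambda>n. psi n x)" using psi_dec by (intro decseq_SucI) auto
  moreover have "\<forall>i. -1 \<le> psi i x" using psi_bd by (auto simp: abs_le_iff)
  ultimately obtain L where "(\<lambda>n. psi n x) \<longlonglongrightarrow> L" by (rule decseq_convergent)
  then show ?thesis by blast
qed

definition psiL :: "real \<Rightarrow> real" where "psiL x = lim (\<lambda>n. psi n x)"

lemma psiL_lim: "(\<lambda>n. psi n x) \<longlonglongrightarrow> psiL x"
  using psi_conv[of x] unfolding psiL_def by (metis limI)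

lemma psiL_meas[measurable]: "psiL \<in> borel_measurable borel"
  by (rule borel_measurable_LIMSEQ_real[OF psiL_lim psi_meas])

lemma psiL_bd: "\<bar>psiL x\<bar> \<le> 1"
proof -
  have "\<bar>psiL x\<bar> = lim (\<lambda>n. \<bar>psi n x\<bar>)" using tendsto_rabs[OF psiL_lim[of x]] by (simp add: limI)
  have "\<bar>psiL x\<bar> \<le> 1"
    using tendsto_rabs[OF psiL_lim[of x]] psi_bd by (intro tendsto_upperbound[of "\<lambda>n. \<bar>psi n x\<bar>"]) (auto)
  then show ?thesis .
qed

lemma TM_psi_lim: "(\<lambda>n. TM (psi n) x) \<longlonglongrightarrow> TM psiL x"
  unfolding TM_def
proof (rule integral_dominated_convergence[where w="\<lambda>y. \<bar>K (x - y)\<bar>"])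
  show "(\<lambda>y. K (x - y) * model psiL y) \<in> borel_measurable lborel" by measurable
  show "\<And>n. (\<lambda>y. K (x - y) * model (psi n) y) \<in> borel_measurable lborel" by measurable
  show "integrable lborel (\<lambda>y. \<bar>K (x - y)\<bar>)"
    using int_Kg_minus[of "\<lambda>_. 1" 1 x] by simp
  show "AE y in lborel. (\<lambda>n. K (x - y) * model (psi n) y) \<longlonglongrightarrow> K (x - y) * model psiL y"
  proof (rule AE_I2)
    fix y
    have "(\<lambda>n. model (psi n) y) \<longlonglongrightarrow> model psiL y"
      unfolding model_def using psiL_lim[of y] psiL_lim[of "-y"] by (auto intro: tendsto_intros)
    then show "(\<lambda>n. K (x - y) * model (psi n) y) \<longlonglongrightarrow> K (x - y) * model psiL y"
      by (intro tendsto_intros)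
  qed
  show "\<And>n. AE y in lborel. norm (K (x - y) * model (psi n) y) \<le> \<bar>K (x - y)\<bar>"
  proof (intro AE_I2)
    fix n y
    have "\<bar>model (psi n) y\<bar> \<le> 1" by (rule model_bd) (rule psi_bd)
    then show "norm (K (x - y) * model (psi n) y) \<le> \<bar>K (x - y)\<bar>"
      by (simp add: abs_mult mult_left_le)
  qed
qed

lemma psiL_fix: assumes "0 < x" "x < 1" shows "psiL x = sat (TM psiL x)"
proof -
  have "(\<lambda>n. psi (Suc n) x) \<longlonglongrightarrow> psiL x" using psiL_lim[of x] by (rule LIMSEQ_Suc)
  moreover have "(\<lambda>n. psi (Suc n) x) \<longlonglongrightarrow> sat (TM psiL x)"
    using sat_tendsto[OF TM_psi_lim[of x]] assms by simp
  ultimately show ?thesis by (rule LIMSEQ_unique)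
qed

definition U0 :: "real \<Rightarrow> real" where "U0 = model psiL"

lemma U0_meas[measurable]: "U0 \<in> borel_measurable borel"
  unfolding U0_def by measurable

lemma U0_bd: "\<bar>U0 y\<bar> \<le> 1"
  unfolding U0_def by (rule model_bd) (rule psiL_bd)

lemma U0_odd: "U0 (- y) = - U0 y"
  unfolding U0_def by (rule model_odd)

lemma U0_left: "y \<le> -1 \<Longrightarrow> U0 y = 1" and U0_right: "y \<ge> 1 \<Longrightarrow> U0 y = -1"
  unfolding U0_def model_def by auto

lemma psiL_nonpos: "0 < x \<Longrightarrow> x < 1 \<Longrightarrow> psiL x \<le> 0"
proof -
  assume x: "0 < x" "x < 1"
  have "psi n x \<le> 0" for n
  proof (induction n)
    case (Suc n) then show ?case using psi_dec[of n x] by simp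
  qed simp
  then show ?thesis using psiL_lim[of x] by (intro tendsto_upperbound[of "\<lambda>n. psi n x"]) auto
qed

lemma U0_neg_nn: "-1 < y \<Longrightarrow> y < 0 \<Longrightarrow> 0 \<le> U0 y"
  unfolding U0_def model_def using psiL_nonpos[of "-y"] by auto

lemma U0_fix:
  assumes "-1 < x" "x < 1"
  shows "U0 x = sat (LINT y|lborel. K (x - y) * U0 y)"
proof -
  have T: "(LINT y|lborel. K (x - y) * U0 y) = TM psiL x" unfolding TM_def U0_def ..
  consider "0 < x" | "x < 0" | "x = 0" by linarith
  then show ?thesis
  proof cases
    case 1 then show ?thesis unfolding T using psiL_fix assms by (simp add: U0_def model_def)
  next
    case 2
    have "U0 x = - psiL (- x)" using 2 assms by (simp add: U0_def model_def)
    also have "\<dots> = - sat (TM psiL (- x))" using psiL_fix[of "-x"] 2 assms by simp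
    also have "\<dots> = sat (TM psiL x)" by (simp add: TM_odd sat_odd)
    finally show ?thesis unfolding T .
  next
    case 3
    have "TM psiL 0 = 0" using TM_odd[of psiL 0] by simp
    then show ?thesis unfolding T using 3 by (simp add: U0_def model_def sat_def)
  qed
qed


definition Fp :: "real \<Rightarrow> real" where "Fp e = (LINT t|lborel. posp K t * indicator {0..e} t)"
definition Fn :: "real \<Rightarrow> real" where "Fn e = (LINT t|lborel. negp K t * indicator {0..e} t)"

lemma int_posp: "integrable lborel (posp K)"
proof -
  have "AE x in lborel. norm (posp K x) \<le> norm (K x)"
    by (rule AE_I2) (auto simp: posp_def)
  then show ?thesis using Bochner_Integration.integrable_bound[OF int_K, of "posp K"] by simp
qed

lemma int_negp: "integrable lborel (negp K)"
proof -
  have "AE x in lborel. norm (negp K x) \<le> norm (K x)"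
    by (rule AE_I2) (auto simp: negp_def)
  then show ?thesis using Bochner_Integration.integrable_bound[OF int_K, of "negp K"] by simp
qed

lemma int_posp_ind: "integrable lborel (\<lambda>t. posp K t * indicator A t)" if "A \<in> sets borel"
  using integrable_real_mult_indicator[of A lborel "posp K"] int_posp that by simp
lemma int_negp_ind: "integrable lborel (\<lambda>t. negp K t * indicator A t)" if "A \<in> sets borel"
  using integrable_real_mult_indicator[of A lborel "negp K"] int_negp that by simp
lemma int_K_ind: "integrable lborel (\<lambda>t. K t * indicator A t)" if "A \<in> sets borel"
  using integrable_real_mult_indicator[of A lborel "K"] int_K that by simp

lemma Fp_mono: "e \<le> e' \<Longrightarrow> Fp e \<le> Fp e'"
  unfolding Fp_def
  by (intro integral_mono int_posp_ind) (auto simp: indicator_def intro: posp_nn)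

lemma Fn_mono: "e \<le> e' \<Longrightarrow> Fn e \<le> Fn e'"
  unfolding Fn_def
  by (intro integral_mono int_negp_ind) (auto simp: indicator_def intro: negp_nn)

lemma Fp_nn: "0 \<le> Fp e"
  unfolding Fp_def by (intro integral_nonneg_AE AE_I2) (auto simp: indicator_def intro: posp_nn)

lemma Fp_sat: "2 \<le> e \<Longrightarrow> Fp e = Fp 2"
  unfolding Fp_def
  by (rule Bochner_Integration.integral_cong) (auto simp: indicator_def intro!: K_neg)

lemma Fn_zero: assumes "e \<le> 2" shows "Fn e = 0"
proof -
  have "AE t in lborel. t \<noteq> (2::real)" by (rule AE_lborel_singleton[THEN AE_mp]) auto
  then have "AE t in lborel. negp K t * indicator {0..e} t = 0"
  proof (rule AE_mp, intro AE_I2 impI)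
    fix t :: real assume "t \<noteq> 2"
    then show "negp K t * indicator {0..e} t = 0" using assms K_pos[of t] by (auto simp: indicator_def)
  qed
  then show ?thesis unfolding Fn_def by (rule integral_eq_zero_AE)
qed

lemma Fn_sat: "2 + s \<le> e \<Longrightarrow> Fn e = Fn (2 + s)"
  unfolding Fn_def
  by (rule Bochner_Integration.integral_cong) (auto simp: indicator_def negp_def K_zero)

lemma Fn_nn: "0 \<le> Fn e"
  unfolding Fn_def by (intro integral_nonneg_AE AE_I2) (auto simp: indicator_def intro: negp_nn)

lemma int_K_ind_eq: "(LINT t|lborel. K t * indicator {0..e} t) = Fp e - Fn e"
proof -
  have "(LINT t|lborel. K t * indicator {0..e} t) = (LINT t|lborel. posp K t * indicator {0..e} t - negp K t * indicator {0..e} t)"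
    by (rule Bochner_Integration.integral_cong) (auto simp: K_split[of t for t] left_diff_distrib)
  also have "\<dots> = Fp e - Fn e" unfolding Fp_def Fn_def
    by (rule Bochner_Integration.integral_diff) (auto intro!: int_posp_ind int_negp_ind)
  finally show ?thesis .
qed

definition S :: "(real \<Rightarrow> real) \<Rightarrow> real" where
  "S g = (LINT t|lborel. K t * (indicator {0..} t * g t))"

lemma S_cong: "(\<And>t. 0 \<le> t \<Longrightarrow> t \<le> 2 + s \<Longrightarrow> g t = g' t) \<Longrightarrow> S g = S g'"
  unfolding S_def
proof (rule Bochner_Integration.integral_cong[OF refl])
  fix t assume "\<And>t. 0 \<le> t \<Longrightarrow> t \<le> 2 + s \<Longrightarrow> g t = g' t"
  then show "K t * (indicator {0..} t * g t) = K t * (indicator {0..} t * g' t)"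
    using K_zero[of t] by (cases "0 \<le> t \<and> t \<le> 2 + s") (auto simp: indicator_def)
qed

lemma S_b: "S (\<lambda>t. indicator {..e} t) = Fp e - Fn e"
  unfolding S_def int_K_ind_eq[symmetric]
  by (rule Bochner_Integration.integral_cong) (auto simp: indicator_def)

lemma S_c:
  assumes d: "0 \<le> d"
  shows "S (\<lambda>t. U0 (t - d - 1)) \<ge> Fp d - Fn (d + 1)"
proof -
  have ib: "\<bar>indicator A t :: real\<bar> \<le> 1" for A t by (auto simp: indicator_def)
  define h where "h t = indicator {d<..<d+2} t * U0 (t - d - 1)" for t
  have hm[measurable]: "h \<in> borel_measurable borel" unfolding h_def by measurable
  have hb: "\<bar>h t\<bar> \<le> 1" for t using U0_bd[of "t - d - 1"] by (auto simp: h_def indicator_def)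
  have pw: "indicator {0..} t * U0 (t - d - 1) = indicator {0..d} t + h t - indicator {d+2..} t" for t
    using d U0_left[of "t - d - 1"] U0_right[of "t - d - 1"] by (auto simp: h_def indicator_def)
  have "S (\<lambda>t. U0 (t - d - 1)) = (LINT t|lborel. K t * indicator {0..d} t + K t * h t - K t * indicator {d+2..} t)"
    unfolding S_def pw by (simp add: algebra_simps)
  also have "\<dots> = (LINT t|lborel. K t * indicator {0..d} t) + (LINT t|lborel. K t * h t) - (LINT t|lborel. K t * indicator {d+2..} t)"
    using int_K_ind[of "{0..d}"] int_K_ind[of "{d+2..}"] int_Kg_plus[of h 1 0] hb
    by (simp add: integral_add integral_diff)
  finally have eq: "S (\<lambda>t. U0 (t - d - 1)) = (Fp d - Fn d) + (LINT t|lborel. K t * h t) - (LINT t|lborel. K t * indicator {d+2..} t)"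
    by (simp add: int_K_ind_eq)
  have ii: "(LINT t|lborel. K t * indicator {d+2..} t) \<le> 0"
  proof -
    have "AE t in lborel. t \<noteq> d + 2" by (rule AE_lborel_singleton[THEN AE_mp]) auto
    then have "AE t in lborel. 0 \<le> - (K t * indicator {d+2..} t)"
    proof (rule AE_mp, intro AE_I2 impI)
      fix t assume "t \<noteq> d + 2"
      then show "0 \<le> - (K t * indicator {d+2..} t)"
        using K_nonpos[of t] d by (cases "d + 2 \<le> t") (auto simp: indicator_def)
    qed
    then have "0 \<le> (LINT t|lborel. - (K t * indicator {d+2..} t))" by (rule integral_nonneg_AE)
    then show ?thesis by simp
  qed
  define w where "w y = indicator {-1<..<0} y * U0 y" for y
  have wm[measurable]: "w \<in> borel_measurable borel" unfolding w_def by measurable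
  have wb: "\<bar>w y\<bar> \<le> 1" for y using U0_bd[of y] by (auto simp: w_def indicator_def)
  have wm2[measurable]: "(\<lambda>y. w (- y)) \<in> borel_measurable borel" by measurable
  have hpw: "h (d + 1 + y) = w y - w (- y)" for y
  proof -
    have "U0 0 = 0" using U0_odd[of 0] by simp
    then show ?thesis using U0_odd[of y] by (auto simp: h_def w_def indicator_def)
  qed
  have "(LINT t|lborel. K t * h t) = (LINT y|lborel. K (d + 1 + y) * h (d + 1 + y))"
    by (rule lint_shift)
  also have "\<dots> = (LINT y|lborel. K (d + 1 + y) * w y) - (LINT y|lborel. K (d + 1 + y) * w (- y))"
    unfolding hpw using int_Kg_plus[of w 1 "d+1"] int_Kg_plus[of "\<lambda>y. w (-y)" 1 "d+1"] wb
    by (simp add: right_diff_distrib integral_diff)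
  also have "(LINT y|lborel. K (d + 1 + y) * w (- y)) = (LINT y|lborel. K (d + 1 - y) * w y)"
    by (subst lint_refl) simp
  also have "(LINT y|lborel. K (d + 1 + y) * w y) - (LINT y|lborel. K (d + 1 - y) * w y)
      = (LINT y|lborel. (K (d + 1 + y) - K (d + 1 - y)) * w y)"
    using int_Kg_plus[of w 1 "d+1"] int_Kg_minus[of w 1 "d+1"] wb
    by (simp add: left_diff_distrib integral_diff)
  also have "\<dots> \<ge> (LINT y|lborel. - (negp K (d + 1 + y) * indicator {-1<..<0} y))"
  proof (rule integral_mono)
    show "integrable lborel (\<lambda>y. - (negp K (d + 1 + y) * indicator {-1<..<0} y))"
    proof -
      have "integrable lborel (\<lambda>y. negp K (d + 1 + 1 * y))"
        using lborel_integrable_real_affine[OF int_negp, of 1 "d+1"] by simp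
      then show ?thesis by (intro integrable_minus integrable_real_mult_indicator) auto
    qed
    show "integrable lborel (\<lambda>y. (K (d + 1 + y) - K (d + 1 - y)) * w y)"
      using int_Kg_plus[of w 1 "d+1"] int_Kg_minus[of w 1 "d+1"] wb
      by (simp add: left_diff_distrib)
    fix y
    show "- (negp K (d + 1 + y) * indicator {-1<..<0} y) \<le> (K (d + 1 + y) - K (d + 1 - y)) * w y"
    proof (cases "-1 < y \<and> y < 0")
      case True
      define t where "t = d + 1 + y"
      have u: "0 \<le> U0 y" "U0 y \<le> 1" using U0_neg_nn[of y] True U0_bd[of y] by auto
      have t0: "0 < t" using True d by (simp add: t_def)
      have key: "K t - K (d + 1 - y) \<ge> - negp K t"
      proof (cases "t < 2")
        case True
        then have "K (d + 1 - y) \<le> K t" using K_pw[of t "d + 1 - y"] t0 \<open>-1 < y \<and> y < 0\<close> by (simp add: t_def)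
        moreover have "negp K t = 0" using K_pos[of t] True t0 by simp
        ultimately show ?thesis by simp
      next
        case False
        then have "K (d + 1 - y) \<le> 0" using K_nonpos[of "d + 1 - y"] \<open>-1 < y \<and> y < 0\<close> by (simp add: t_def)
        then show ?thesis using K_ge_negp[of t] by simp
      qed
      have "- negp K t \<le> - negp K t * U0 y" using u negp_nn[of t] by (simp add: mult_left_le)
      also have "\<dots> \<le> (K t - K (d + 1 - y)) * U0 y" using key u by (intro mult_right_mono) auto
      finally show ?thesis using True by (simp add: w_def t_def)
    qed (simp add: w_def)
  qed
  finally have iii: "(LINT t|lborel. K t * h t) \<ge> - (LINT y|lborel. negp K (d + 1 + y) * indicator {-1<..<0} y)"
    by simp
  have "(LINT y|lborel. negp K (d + 1 + y) * indicator {-1<..<0} y) = (LINT t|lborel. negp K t * indicator {d<..<d+1} t)"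
    by (subst lint_shift[where a="d+1"]) (rule Bochner_Integration.integral_cong, auto simp: indicator_def)
  also have "\<dots> \<le> (LINT t|lborel. negp K t * indicator {0..d+1} t - negp K t * indicator {0..d} t)"
  proof (rule integral_mono)
    show "integrable lborel (\<lambda>t. negp K t * indicator {d<..<d + 1} t)" by (rule int_negp_ind) simp
    show "integrable lborel (\<lambda>t. negp K t * indicator {0..d+1} t - negp K t * indicator {0..d} t)"
      by (intro Bochner_Integration.integrable_diff int_negp_ind) auto
    fix t show "negp K t * indicator {d<..<d + 1} t \<le> negp K t * indicator {0..d+1} t - negp K t * indicator {0..d} t"
      using d negp_nn[of t] by (auto simp: indicator_def)
  qed
  also have "\<dots> = Fn (d + 1) - Fn d"
    unfolding Fn_def by (rule Bochner_Integration.integral_diff) (auto intro!: int_negp_ind)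
  finally show ?thesis using eq ii iii by simp
qed


lemma window_split:
  assumes [measurable]: "V \<in> borel_measurable borel" and Vb: "\<And>y. \<bar>V y\<bar> \<le> 1"
  shows "(LINT y|lborel. K (x - y) * V y) = S (\<lambda>t. V (x + t)) + S (\<lambda>t. V (x - t))"
proof -
  have ib: "\<bar>indicator A y * V (x + y)\<bar> \<le> 1" "\<bar>indicator A y * V (x - y)\<bar> \<le> 1" for A y
    using Vb[of "x+y"] Vb[of "x - y"] by (auto simp: indicator_def)
  have "(LINT y|lborel. K (x - y) * V y) = (LINT t|lborel. K (x - (x + t)) * V (x + t))"
    by (rule lint_shift)
  also have "\<dots> = (LINT t|lborel. K (0 + t) * (indicator {0..} t * V (x + t)) + K (0 + t) * (indicator {..<0} t * V (x + t)))"
    using K_even by (intro Bochner_Integration.integral_cong) (auto simp: indicator_def)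
  also have "\<dots> = (LINT t|lborel. K (0 + t) * (indicator {0..} t * V (x + t))) + (LINT t|lborel. K (0 + t) * (indicator {..<0} t * V (x + t)))"
    by (rule Bochner_Integration.integral_add; rule int_Kg_plus[where M=1]) (use ib in auto)
  also have "(LINT t|lborel. K (0 + t) * (indicator {..<0} t * V (x + t))) = (LINT t|lborel. K (0 + - t) * (indicator {..<0} (- t) * V (x + - t)))"
    by (rule lint_refl)
  also have "\<dots> = (LINT t|lborel. K t * (indicator {0<..} t * V (x - t)))"
    using K_even by (intro Bochner_Integration.integral_cong) (auto simp: indicator_def)
  also have "\<dots> = (LINT t|lborel. K t * (indicator {0..} t * V (x - t)))"
  proof (rule Bochner_Integration.integral_cong_AE)
    show "AE t in lborel. K t * (indicator {0<..} t * V (x - t)) = K t * (indicator {0..} t * V (x - t))"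
      by (rule AE_lborel_singleton[where c="0::real", THEN AE_mp], intro AE_I2) (auto simp: indicator_def)
  qed auto
  finally show ?thesis unfolding S_def by simp
qed

lemma S_cmult: "S (\<lambda>t. c * g t) = c * S g"
  unfolding S_def by (simp add: algebra_simps)

definition RP :: "(real \<Rightarrow> real) \<Rightarrow> real \<Rightarrow> bool" where
  "RP g D \<longleftrightarrow> (\<forall>t. 0 \<le> t \<longrightarrow> t \<le> 2 + s \<longrightarrow> g t = indicator {..D} t)
     \<or> (\<forall>t. 0 \<le> t \<longrightarrow> t \<le> 2 + s \<longrightarrow> g t = U0 (t - D - 1))"

lemma RP_long: assumes "RP g D" "2 + s \<le> D" shows "S g = Fp 2 - Fn (2 + s)"
proof -
  have "S g = S (\<lambda>t. indicator {..2+s} t)"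
    using assms U0_left by (intro S_cong) (auto simp: RP_def indicator_def)
  also have "\<dots> = Fp (2 + s) - Fn (2 + s)" by (rule S_b)
  also have "Fp (2 + s) = Fp 2" using s_pos by (intro Fp_sat) auto
  finally show ?thesis .
qed

lemma RP_bound: assumes "RP g D" "0 \<le> D" shows "S g \<ge> Fp D - Fn (D + 1)"
  using assms(1) unfolding RP_def
proof
  assume "\<forall>t. 0 \<le> t \<longrightarrow> t \<le> 2 + s \<longrightarrow> g t = indicator {..D} t"
  then have "S g = S (\<lambda>t. indicator {..D} t)" by (intro S_cong) auto
  also have "\<dots> = Fp D - Fn D" by (rule S_b)
  finally show ?thesis using Fn_mono[of D "D+1"] by simp
next
  assume "\<forall>t. 0 \<le> t \<longrightarrow> t \<le> 2 + s \<longrightarrow> g t = U0 (t - D - 1)"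
  then have "S g = S (\<lambda>t. U0 (t - D - 1))" by (intro S_cong) auto
  then show ?thesis using S_c[OF assms(2)] by simp
qed


lemma sat_c: "c = 1 \<or> c = -1 \<Longrightarrow> sat (c * w) = c * sat w"
  using sat_odd[of w] by auto

lemma sat_cge: assumes "c = 1 \<or> c = -1" "1 \<le> c * w" shows "sat w = c"
  using assms by (auto simp: sat_def)

context
  fixes a b i :: "nat \<Rightarrow> real" and N :: nat and r :: real
  assumes N_pos: "0 < N"
    and ab: "\<And>j. j < N \<Longrightarrow> -r \<le> a j \<and> b j \<le> r \<and> 4 + 2 * s < b j - a j"
    and gap: "\<And>j. Suc j < N \<Longrightarrow> b j + 2 < a (Suc j)"
    and isgn: "\<And>j. j < N \<Longrightarrow> i j = 1 \<or> i j = -1"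
    and key: "\<And>d. 0 \<le> d \<Longrightarrow> 1 \<le> Fp 2 - Fn (2 + s) + (Fp d - Fn (d + 1))"
begin

lemma a_lt: "j < k \<Longrightarrow> k < N \<Longrightarrow> b j + 2 < a k"
proof (induction k)
  case 0 then show ?case by simp
next
  case (Suc k)
  show ?case
  proof (cases "j = k")
    case True then show ?thesis using gap Suc by simp
  next
    case False
    then have "b j + 2 < a k" using Suc by simp
    moreover have "a k < b k" using ab[of k] Suc s_pos by simp
    moreover have "b k + 2 < a (Suc k)" using gap Suc by simp
    ultimately show ?thesis by simp
  qed
qed

definition Rg :: "nat \<Rightarrow> real set" where
  "Rg j = {x. (0 < j \<longrightarrow> a j \<le> x) \<and> (Suc j < N \<longrightarrow> x < a (Suc j))}"

definition tr :: "nat \<Rightarrow> bool" where "tr j \<longleftrightarrow> Suc j < N \<and> i j \<noteq> i (Suc j)"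

definition val :: "nat \<Rightarrow> real \<Rightarrow> real" where
  "val j x = (if tr j \<and> a (Suc j) - 2 < x then - i (Suc j) * U0 (x - a (Suc j) + 1) else i j)"

definition uu :: "real \<Rightarrow> real" where
  "uu x = (\<Sum>j<N. indicator (Rg j) x * val j x)"

lemma Rg_I: "(0 < j \<Longrightarrow> a j \<le> y) \<Longrightarrow> (Suc j < N \<Longrightarrow> y < a (Suc j)) \<Longrightarrow> y \<in> Rg j"
  unfolding Rg_def by auto

lemma Rg_D: "y \<in> Rg j \<Longrightarrow> (0 < j \<longrightarrow> a j \<le> y) \<and> (Suc j < N \<longrightarrow> y < a (Suc j))"
  unfolding Rg_def by auto

lemma val_plain: "\<not> (tr j \<and> a (Suc j) - 2 < y) \<Longrightarrow> val j y = i j"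
  unfolding val_def by auto

lemma i_tr: "tr j \<Longrightarrow> i j = - i (Suc j)"
  unfolding tr_def using isgn[of j] isgn[of "Suc j"] by auto

lemma i_ntr: "Suc j < N \<Longrightarrow> \<not> tr j \<Longrightarrow> i j = i (Suc j)"
  unfolding tr_def by auto

lemma a_le: "j \<le> k \<Longrightarrow> k < N \<Longrightarrow> a j \<le> a k"
proof (cases "j = k")
  case False
  assume "j \<le> k" "k < N"
  then have "b j + 2 < a k" using False by (intro a_lt) auto
  moreover have "a j < b j" using ab[of j] \<open>j \<le> k\<close> \<open>k < N\<close> s_pos by simp
  ultimately show ?thesis by simp
qed simp

lemma Rg_disj: assumes "j < k" "k < N" "x \<in> Rg j" shows "x \<notin> Rg k"
proof
  assume "x \<in> Rg k"
  then have "a k \<le> x" using assms by (auto simp: Rg_def)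
  moreover have "x < a (Suc j)" using assms by (auto simp: Rg_def)
  moreover have "a (Suc j) \<le> a k" using assms by (intro a_le) auto
  ultimately show False by simp
qed

lemma uu_eq: assumes "j < N" "x \<in> Rg j" shows "uu x = val j x"
proof -
  have "uu x = indicator (Rg j) x * val j x + (\<Sum>k\<in>{..<N} - {j}. indicator (Rg k) x * val k x)"
    unfolding uu_def using assms by (subst sum.remove[of _ j]) auto
  also have "(\<Sum>k\<in>{..<N} - {j}. indicator (Rg k) x * val k x) = 0"
  proof (rule sum.neutral, rule ballI)
    fix k assume k: "k \<in> {..<N} - {j}"
    then have "x \<notin> Rg k"
      using Rg_disj[of j k x] Rg_disj[of k j x] assms by (cases "j < k") auto
    then show "indicator (Rg k) x * val k x = 0" by simp
  qed
  finally show ?thesis using assms by simp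
qed

lemma Rg_cover: "\<exists>j<N. x \<in> Rg j"
proof -
  define J where "J = {j. j < N \<and> (j = 0 \<or> a j \<le> x)}"
  have fin: "finite J" unfolding J_def by auto
  have ne: "0 \<in> J" using N_pos unfolding J_def by auto
  define j where "j = Max J"
  have jJ: "j \<in> J" unfolding j_def using fin ne by (intro Max_in) auto
  have "x \<in> Rg j"
  proof (rule Rg_I)
    show "0 < j \<Longrightarrow> a j \<le> x" using jJ unfolding J_def by auto
    show "x < a (Suc j)" if "Suc j < N"
    proof (rule ccontr)
      assume "\<not> x < a (Suc j)"
      then have "Suc j \<in> J" using that unfolding J_def by auto
      then have "Suc j \<le> j" unfolding j_def using fin by (intro Max_ge) auto
      then show False by simp
    qed
  qed
  then show ?thesis using jJ unfolding J_def by auto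
qed

lemma val_bd: "j < N \<Longrightarrow> \<bar>val j x\<bar> \<le> 1"
  unfolding val_def using isgn[of j] isgn[of "Suc j"] U0_bd[of "x - a (Suc j) + 1"]
  by (auto simp: tr_def abs_mult)

lemma uu_bd: "\<bar>uu x\<bar> \<le> 1"
  using Rg_cover[of x] uu_eq val_bd by auto

lemma uu_meas[measurable]: "uu \<in> borel_measurable borel"
proof -
  have [measurable]: "Rg j \<in> sets borel" for j
  proof -
    have "Rg j = {x. (0 < j \<longrightarrow> a j \<le> x)} \<inter> {x. (Suc j < N \<longrightarrow> x < a (Suc j))}"
      unfolding Rg_def by auto
    then show ?thesis by simp
  qed
  have [measurable]: "val j \<in> borel_measurable borel" for j
    unfolding val_def[abs_def] by measurable
  show ?thesis unfolding uu_def[abs_def] by measurable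
qed

lemma uu_Om: assumes "j < N" "a j \<le> x" "x \<le> b j" shows "uu x = i j"
proof -
  have "x \<in> Rg j" using assms gap[of j] by (intro Rg_I) auto
  moreover have "\<not> (tr j \<and> a (Suc j) - 2 < x)" using assms gap[of j] by (auto simp: tr_def)
  ultimately show ?thesis using uu_eq assms val_plain by simp
qed


lemma uu_fix_T:
  assumes x: "-r \<le> x" "x \<le> r" and j: "j < N" "x \<in> Rg j" and T: "tr j" "a (Suc j) - 2 < x"
  shows "uu x = sat (Top K {-r..r} uu x)"
proof -
  define V where "V y = indicator {-r..r} y * uu y" for y
  have Vval: "V y = val k y" if "k < N" "y \<in> Rg k" "-r \<le> y" "y \<le> r" for k y
    using that uu_eq by (simp add: V_def)
  have Top: "Top K {-r..r} uu x = (LINT y|lborel. K (x - y) * V y)"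
    unfolding Top_def V_def by (simp add: mult.assoc)
  define m where "m = a (Suc j) - 1"
  have sj: "Suc j < N" using T by (simp add: tr_def)
  have xm: "x < a (Suc j)" using j Rg_D sj by blast
  have c: "i j = - i (Suc j)" using T i_tr by simp
  have abj: "-r \<le> a j" "a j + 4 + 2 * s < b j" using ab[OF j(1)] by auto
  have abS: "-r \<le> a (Suc j)" "b (Suc j) \<le> r" "a (Suc j) + 4 + 2 * s < b (Suc j)" using ab[OF sj] by auto
  have g1: "b j + 2 < a (Suc j)" using gap sj by simp
  have g2: "Suc (Suc j) < N \<Longrightarrow> b (Suc j) + 2 < a (Suc (Suc j))" using gap by simp
  have sp: "0 < s" by (rule s_pos)
  have claim: "V y = i j * U0 (y - m)" if y: "\<bar>x - y\<bar> \<le> 2 + s" for y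
  proof -
    consider "y \<le> a (Suc j) - 2" | "a (Suc j) - 2 < y \<and> y < a (Suc j)" | "a (Suc j) \<le> y" by linarith
    then show ?thesis
    proof cases
      case 1
      have yR: "y \<in> Rg j" using 1 y abj g1 sp T(2) by (intro Rg_I) auto
      have "V y = val j y" using yR j abj abS 1 y g1 sp T(2) by (intro Vval) auto
      also have "\<dots> = i j" using 1 by (intro val_plain) auto
      finally show ?thesis using U0_left[of "y - m"] 1 by (simp add: m_def)
    next
      case 2
      have yR: "y \<in> Rg j" using 2 y abj g1 sp by (intro Rg_I) auto
      have "V y = val j y" using yR j abj abS 2 y g1 sp by (intro Vval) auto
      also have "\<dots> = i j * U0 (y - m)" using 2 T c by (simp add: val_def m_def algebra_simps)
      finally show ?thesis .
    next
      case 3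
      have yR: "y \<in> Rg (Suc j)" using 3 y abS g2 sp xm by (intro Rg_I) auto
      have yr: "y \<le> r" using 3 y abS sp xm by auto
      have "V y = val (Suc j) y" using yR sj abS 3 yr by (intro Vval) auto
      also have "\<dots> = i (Suc j)"
      proof (rule val_plain)
        show "\<not> (tr (Suc j) \<and> a (Suc (Suc j)) - 2 < y)"
          using g2 y xm abS sp by (auto simp: tr_def)
      qed
      finally show ?thesis using U0_right[of "y - m"] 3 c by (simp add: m_def)
    qed
  qed
  have "Top K {-r..r} uu x = (LINT y|lborel. K (x - y) * (i j * U0 (y - m)))"
    unfolding Top
  proof (rule Bochner_Integration.integral_cong[OF refl])
    fix y show "K (x - y) * V y = K (x - y) * (i j * U0 (y - m))"
      using claim[of y] K_zero[of "x - y"] by (cases "\<bar>x - y\<bar> \<le> 2 + s") auto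
  qed
  also have "\<dots> = i j * (LINT y|lborel. K (x - y) * U0 (y - m))"
    by (simp add: algebra_simps)
  also have "(LINT y|lborel. K (x - y) * U0 (y - m)) = (LINT z|lborel. K ((x - m) - z) * U0 z)"
    by (subst lint_shift[where a=m]) (simp add: algebra_simps)
  finally have "sat (Top K {-r..r} uu x) = i j * sat (LINT z|lborel. K ((x - m) - z) * U0 z)"
    using sat_c isgn[OF j(1)] by simp
  also have "sat (LINT z|lborel. K ((x - m) - z) * U0 z) = U0 (x - m)"
    using T xm by (intro U0_fix[symmetric]) (auto simp: m_def)
  also have "i j * U0 (x - m) = val j x" using T c by (simp add: val_def m_def algebra_simps)
  also have "\<dots> = uu x" using uu_eq j by simp
  finally show ?thesis by simp
qed


definition VV :: "real \<Rightarrow> real" where "VV y = indicator {-r..r} y * uu y"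

lemma VV_val: "k < N \<Longrightarrow> y \<in> Rg k \<Longrightarrow> -r \<le> y \<Longrightarrow> y \<le> r \<Longrightarrow> VV y = val k y"
  using uu_eq by (simp add: VV_def)

lemma VV_out: "y < -r \<or> r < y \<Longrightarrow> VV y = 0"
  by (auto simp: VV_def)

lemma VV_meas[measurable]: "VV \<in> borel_measurable borel"
  unfolding VV_def[abs_def] by measurable

lemma VV_bd: "\<bar>VV y\<bar> \<le> 1"
  using uu_bd[of y] by (auto simp: VV_def indicator_def)

lemma right_side:
  assumes x: "-r \<le> x" "x \<le> r" and j: "j < N" "x \<in> Rg j" and NT: "\<not> (tr j \<and> a (Suc j) - 2 < x)"
  shows "\<exists>D\<ge>0. RP (\<lambda>t. i j * VV (x + t)) D \<and> (2 + s \<le> D \<or> b j \<le> x + D)"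
proof -
  have sp: "0 < s" by (rule s_pos)
  have abj: "-r \<le> a j" "a j + 4 + 2 * s < b j" "b j \<le> r" using ab[OF j(1)] by auto
  have ajx: "0 < j \<Longrightarrow> a j \<le> x" using Rg_D[OF j(2)] by auto
  have ii: "i j * i j = 1" using isgn[OF j(1)] by auto
  consider "\<not> Suc j < N" | "Suc j < N" "\<not> tr j" | "tr j" by (auto simp: tr_def)
  then show ?thesis
  proof cases
    case 1
    have "RP (\<lambda>t. i j * VV (x + t)) (r - x)"
      unfolding RP_def
    proof (intro disjI1 allI impI)
      fix t assume t: "0 \<le> t" "t \<le> 2 + s"
      show "i j * VV (x + t) = indicator {..r - x} t"
      proof (cases "x + t \<le> r")
        case True
        have "x + t \<in> Rg j" using 1 ajx t by (intro Rg_I) auto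
        then have "VV (x + t) = val j (x + t)" using True j x t by (intro VV_val) auto
        also have "\<dots> = i j" using 1 by (intro val_plain) (auto simp: tr_def)
        finally show ?thesis using ii True by (simp add: indicator_def)
      next
        case False then show ?thesis using VV_out[of "x+t"] by (simp add: indicator_def)
      qed
    qed
    then show ?thesis using x abj by (intro exI[of _ "r - x"]) auto
  next
    case 2
    have xS: "x < a (Suc j)" using Rg_D[OF j(2)] 2 by auto
    have abS: "-r \<le> a (Suc j)" "b (Suc j) \<le> r" "a (Suc j) + 4 + 2 * s < b (Suc j)" using ab[OF 2(1)] by auto
    have g2: "Suc (Suc j) < N \<Longrightarrow> b (Suc j) + 2 < a (Suc (Suc j))" using gap by simp
    have iS: "i j = i (Suc j)" using i_ntr 2 by simp
    have "RP (\<lambda>t. i j * VV (x + t)) (2 + s)"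
      unfolding RP_def
    proof (intro disjI1 allI impI)
      fix t assume t: "0 \<le> t" "t \<le> 2 + s"
      have "VV (x + t) = i j"
      proof (cases "x + t < a (Suc j)")
        case True
        have "x + t \<in> Rg j" using True ajx t by (intro Rg_I) auto
        then have "VV (x + t) = val j (x + t)" using True j x t abS by (intro VV_val) auto
        also have "\<dots> = i j" using 2 by (intro val_plain) auto
        finally show ?thesis .
      next
        case False
        have "x + t \<in> Rg (Suc j)" using False t xS g2 abS by (intro Rg_I) auto
        then have "VV (x + t) = val (Suc j) (x + t)" using False 2 x t xS abS by (intro VV_val) auto
        also have "\<dots> = i (Suc j)"
          using g2 t xS abS by (intro val_plain) (auto simp: tr_def)
        finally show ?thesis using iS by simp
      qed
      then show "i j * VV (x + t) = indicator {..2 + s} t" using ii t by (simp add: indicator_def)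
    qed
    then show ?thesis using sp by (intro exI[of _ "2 + s"]) auto
  next
    case 3
    have sj: "Suc j < N" using 3 by (simp add: tr_def)
    have xS: "x \<le> a (Suc j) - 2" using NT 3 by auto
    have abS: "-r \<le> a (Suc j)" "b (Suc j) \<le> r" "a (Suc j) + 4 + 2 * s < b (Suc j)" using ab[OF sj] by auto
    have g1: "b j + 2 < a (Suc j)" using gap sj by simp
    have g2: "Suc (Suc j) < N \<Longrightarrow> b (Suc j) + 2 < a (Suc (Suc j))" using gap by simp
    have c: "i j = - i (Suc j)" using 3 i_tr by simp
    define D where "D = a (Suc j) - 2 - x"
    have "RP (\<lambda>t. i j * VV (x + t)) D"
      unfolding RP_def
    proof (intro disjI2 allI impI)
      fix t assume t: "0 \<le> t" "t \<le> 2 + s"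
      consider "x + t \<le> a (Suc j) - 2" | "a (Suc j) - 2 < x + t" "x + t < a (Suc j)" | "a (Suc j) \<le> x + t"
        by linarith
      then show "i j * VV (x + t) = U0 (t - D - 1)"
      proof cases
        case 1
        have "x + t \<in> Rg j" using 1 ajx t by (intro Rg_I) auto
        then have "VV (x + t) = val j (x + t)" using 1 j x t abS by (intro VV_val) auto
        also have "\<dots> = i j" using 1 by (intro val_plain) auto
        finally show ?thesis using ii U0_left[of "t - D - 1"] 1 by (simp add: D_def)
      next
        case 2
        have "x + t \<in> Rg j" using 2 ajx t by (intro Rg_I) auto
        then have "VV (x + t) = val j (x + t)" using 2 j x t abS by (intro VV_val) auto
        also have "\<dots> = i j * U0 (t - D - 1)" using 2 3 c by (simp add: val_def D_def algebra_simps)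
        finally show ?thesis using ii by (simp add: mult.assoc[symmetric])
      next
        case 3
        have "x + t \<in> Rg (Suc j)" using 3 t xS g2 abS by (intro Rg_I) auto
        then have "VV (x + t) = val (Suc j) (x + t)" using 3 sj x t xS abS by (intro VV_val) auto
        also have "\<dots> = i (Suc j)"
          using g2 t xS abS by (intro val_plain) (auto simp: tr_def)
        finally show ?thesis using c ii U0_right[of "t - D - 1"] 3 by (simp add: D_def)
      qed
    qed
    moreover have "0 \<le> D" "b j \<le> x + D" using xS g1 by (auto simp: D_def)
    ultimately show ?thesis by blast
  qed
qed


lemma left_side:
  assumes x: "-r \<le> x" "x \<le> r" and j: "j < N" "x \<in> Rg j" and NT: "\<not> (tr j \<and> a (Suc j) - 2 < x)"
  shows "\<exists>D\<ge>0. RP (\<lambda>t. i j * VV (x - t)) D \<and> (2 + s \<le> D \<or> x - D \<le> a j)"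
proof -
  have sp: "0 < s" by (rule s_pos)
  have abj: "-r \<le> a j" "a j + 4 + 2 * s < b j" "b j \<le> r" using ab[OF j(1)] by auto
  have xS: "Suc j < N \<Longrightarrow> x < a (Suc j)" using Rg_D[OF j(2)] by auto
  have ii: "i j * i j = 1" using isgn[OF j(1)] by auto
  have own: "VV y = i j" if "a j \<le> y \<or> j = 0" "y \<le> x" "-r \<le> y" for y
  proof -
    have "y \<in> Rg j" using that xS by (intro Rg_I) auto
    then have "VV y = val j y" using that j x by (intro VV_val) auto
    also have "\<dots> = i j" using NT that by (intro val_plain) auto
    finally show ?thesis .
  qed
  consider "j = 0" | k where "j = Suc k" "\<not> tr k" | k where "j = Suc k" "tr k" by (cases j) auto
  then show ?thesis
  proof cases
    case 1
    have "RP (\<lambda>t. i j * VV (x - t)) (x + r)"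
      unfolding RP_def
    proof (intro disjI1 allI impI)
      fix t assume t: "0 \<le> t" "t \<le> 2 + s"
      show "i j * VV (x - t) = indicator {..x + r} t"
      proof (cases "-r \<le> x - t")
        case True then show ?thesis using own[of "x - t"] 1 t ii by (simp add: indicator_def)
      next
        case False then show ?thesis using VV_out[of "x - t"] by (simp add: indicator_def)
      qed
    qed
    then show ?thesis using x 1 abj by (intro exI[of _ "x + r"]) auto
  next
    case 2
    have k: "k < N" using j 2 by simp
    have abk: "-r \<le> a k" "a k + 4 + 2 * s < b k" using ab[OF k] by auto
    have g: "b k + 2 < a j" using gap j 2 by simp
    have ajx: "a j \<le> x" using Rg_D[OF j(2)] 2 by auto
    have ik: "i k = i j" using i_ntr[of k] 2 j by simp
    have "RP (\<lambda>t. i j * VV (x - t)) (2 + s)"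
      unfolding RP_def
    proof (intro disjI1 allI impI)
      fix t assume t: "0 \<le> t" "t \<le> 2 + s"
      have "VV (x - t) = i j"
      proof (cases "a j \<le> x - t")
        case True then show ?thesis using own[of "x - t"] t abj by auto
      next
        case False
        have "x - t \<in> Rg k" using False t abk g ajx 2 by (intro Rg_I) auto
        then have "VV (x - t) = val k (x - t)" using False t abk g ajx x k by (intro VV_val) auto
        also have "\<dots> = i k" using 2 by (intro val_plain) auto
        finally show ?thesis using ik by simp
      qed
      then show "i j * VV (x - t) = indicator {..2 + s} t" using ii t by (simp add: indicator_def)
    qed
    then show ?thesis using sp by (intro exI[of _ "2 + s"]) auto
  next
    case 3
    have k: "k < N" using j 3 by simp
    have abk: "-r \<le> a k" "a k + 4 + 2 * s < b k" using ab[OF k] by auto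
    have g: "b k + 2 < a j" using gap j 3 by simp
    have ajx: "a j \<le> x" using Rg_D[OF j(2)] 3 by auto
    have c: "i k = - i j" using i_tr[of k] 3 by simp
    define D where "D = x - a j"
    have "RP (\<lambda>t. i j * VV (x - t)) D"
      unfolding RP_def
    proof (intro disjI2 allI impI)
      fix t assume t: "0 \<le> t" "t \<le> 2 + s"
      consider "a j \<le> x - t" | "a j - 2 < x - t" "x - t < a j" | "x - t \<le> a j - 2" by linarith
      then show "i j * VV (x - t) = U0 (t - D - 1)"
      proof cases
        case 1
        then show ?thesis using own[of "x - t"] t abj ii U0_left[of "t - D - 1"] by (simp add: D_def)
      next
        case 2
        have "x - t \<in> Rg k" using 2 t abk g ajx 3 by (intro Rg_I) auto
        then have "VV (x - t) = val k (x - t)" using 2 t abk g ajx x k by (intro VV_val) auto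
        also have "\<dots> = - i j * U0 (x - t - a j + 1)" using 2 3 by (simp add: val_def)
        also have "U0 (x - t - a j + 1) = - U0 (t - D - 1)"
          using U0_odd[of "t - D - 1"] by (simp add: D_def algebra_simps)
        finally show ?thesis using ii by (simp add: mult.assoc[symmetric])
      next
        case 4: 3
        have "x - t \<in> Rg k" using 4 t abk g ajx 3 by (intro Rg_I) auto
        then have "VV (x - t) = val k (x - t)" using 4 t abk g ajx x k by (intro VV_val) auto
        also have "\<dots> = i k" using 4 3 by (intro val_plain) auto
        finally show ?thesis using c ii U0_right[of "t - D - 1"] 4 by (simp add: D_def)
      qed
    qed
    moreover have "0 \<le> D" "x - D \<le> a j" using ajx by (auto simp: D_def)
    ultimately show ?thesis by blast
  qed
qed

lemma uu_fix:
  assumes x: "-r \<le> x" "x \<le> r"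
  shows "uu x = sat (Top K {-r..r} uu x)"
proof -
  obtain j where j: "j < N" "x \<in> Rg j" using Rg_cover by blast
  show ?thesis
  proof (cases "tr j \<and> a (Suc j) - 2 < x")
    case True then show ?thesis using uu_fix_T x j by blast
  next
    case NT: False
    have Top: "Top K {-r..r} uu x = (LINT y|lborel. K (x - y) * VV y)"
      unfolding Top_def VV_def by (simp add: mult.assoc)
    also have "\<dots> = S (\<lambda>t. VV (x + t)) + S (\<lambda>t. VV (x - t))"
      by (rule window_split) (auto intro: VV_bd)
    finally have "i j * Top K {-r..r} uu x = S (\<lambda>t. i j * VV (x + t)) + S (\<lambda>t. i j * VV (x - t))"
      by (simp add: S_cmult algebra_simps)
    moreover obtain DR where R: "0 \<le> DR" "RP (\<lambda>t. i j * VV (x + t)) DR" "2 + s \<le> DR \<or> b j \<le> x + DR"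
      using right_side[OF x j NT] by blast
    moreover obtain DL where L: "0 \<le> DL" "RP (\<lambda>t. i j * VV (x - t)) DL" "2 + s \<le> DL \<or> x - DL \<le> a j"
      using left_side[OF x j NT] by blast
    moreover have "4 + 2 * s < b j - a j" using ab[OF j(1)] by auto
    ultimately have ge: "1 \<le> i j * Top K {-r..r} uu x"
      using RP_long RP_bound key by (smt (verit))
    have "sat (Top K {-r..r} uu x) = i j" using sat_cge[OF isgn[OF j(1)] ge] .
    also have "\<dots> = uu x" using uu_eq[OF j] val_plain[OF NT] by simp
    finally show ?thesis by simp
  qed
qed

lemma core_ex: "\<exists>u. u \<in> borel_measurable borel \<and> (\<forall>x. \<bar>u x\<bar> \<le> 1)
   \<and> (\<forall>x. -r \<le> x \<longrightarrow> x \<le> r \<longrightarrow> u x = sat (Top K {-r..r} u x))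
   \<and> (\<forall>j<N. \<forall>x. a j \<le> x \<longrightarrow> x \<le> b j \<longrightarrow> u x = i j)"
  by (rule exI[of _ uu]) (auto intro: uu_bd uu_fix uu_Om)

end

end


context kern begin

lemma set_lint_conv: "(LBINT x : A. f x) = (LINT x|lborel. f x * indicator A x)" for f :: "real \<Rightarrow> real"
  unfolding set_lebesgue_integral_def by (intro Bochner_Integration.integral_cong) (auto simp: mult.commute)

lemma Fp_LBINT: "0 \<le> e \<Longrightarrow> (LBINT x=0..e. posp K x) = Fp e"
  unfolding Fp_def using interval_integral_Icc[of 0 e "posp K"] by (simp add: set_lint_conv zero_ereal_def)

lemma Fn_LBINT: assumes "0 \<le> e" shows "(LBINT x=2..2+e. negp K x) = Fn (2 + e)"
proof -
  have ee: "(2::ereal) + ereal e = ereal (2 + e)" by simp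
  have "(LBINT x=2..2+e. negp K x) = (LINT x|lborel. negp K x * indicator {2..2+e} x)"
    unfolding ee using assms by (simp add: interval_integral_Icc set_lint_conv)
  also have "\<dots> = Fn (2 + e)" unfolding Fn_def
  proof (rule Bochner_Integration.integral_cong[OF refl])
    fix x show "negp K x * indicator {2..2 + e} x = negp K x * indicator {0..2 + e} x"
      using K_pos[of x] by (cases "0 \<le> x \<and> x < 2") (auto simp: indicator_def)
  qed
  finally show ?thesis by (simp only: ee)
qed

lemma Fn_le_Q: "Fn e \<le> Fn (2 + s)"
proof (cases "e \<le> 2 + s")
  case True then show ?thesis by (rule Fn_mono)
next
  case False then show ?thesis using Fn_sat[of e] by simp
qed

lemma negp_total: "(LBINT x. negp K x) = 2 * Fn (2 + s)"
proof -
  have e: "negp K (- x) = negp K x" for x using K_even[of x] by (simp add: negp_def)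
  have "(LBINT x. negp K x) = (LINT x|lborel. negp K x * indicator {0..} x + negp K x * indicator {..<0} x)"
    by (rule Bochner_Integration.integral_cong) (auto simp: indicator_def)
  also have "\<dots> = (LINT x|lborel. negp K x * indicator {0..} x) + (LINT x|lborel. negp K x * indicator {..<0} x)"
    by (rule Bochner_Integration.integral_add) (auto intro!: int_negp_ind)
  also have "(LINT x|lborel. negp K x * indicator {..<0} x) = (LINT x|lborel. negp K (- x) * indicator {..<0} (- x))"
    by (rule lint_refl)
  also have "\<dots> = (LINT x|lborel. negp K x * indicator {0..} x)"
    using K_pos[of 0] by (intro Bochner_Integration.integral_cong) (auto simp: e indicator_def)
  also have "(LINT x|lborel. negp K x * indicator {0..} x) = Fn (2 + s)"
    unfolding Fn_def
  proof (rule Bochner_Integration.integral_cong[OF refl])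
    fix x show "negp K x * indicator {0..} x = negp K x * indicator {0..2 + s} x"
      using K_zero[of x] by (cases "x \<le> 2 + s") (auto simp: indicator_def negp_def)
  qed
  finally show ?thesis by simp
qed

lemma key_iii:
  assumes "Fp 2 \<ge> 1 + (LBINT x. negp K x)" "0 \<le> d"
  shows "1 \<le> Fp 2 - Fn (2 + s) + (Fp d - Fn (d + 1))"
  using assms negp_total Fp_nn[of d] Fn_le_Q[of "d+1"] by simp

lemma key_iv:
  assumes P: "Fp 2 \<ge> 1 + Fn (2 + s)" and H: "\<And>x. 0 \<le> x \<Longrightarrow> x \<le> 2 \<Longrightarrow> Fn (2 + x) \<le> Fp x"
    and d: "0 \<le> d"
  shows "1 \<le> Fp 2 - Fn (2 + s) + (Fp d - Fn (d + 1))"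
proof -
  have "Fn (d + 1) \<le> Fp d"
  proof -
    consider "d \<le> 1" | "1 < d" "d \<le> 3" | "3 < d" by linarith
    then show ?thesis
    proof cases
      case 1 then show ?thesis using Fn_zero[of "d+1"] Fp_nn[of d] by simp
    next
      case 2
      have "Fn (d + 1) = Fn (2 + (d - 1))" by (rule arg_cong[where f=Fn]) simp
      also have "\<dots> \<le> Fp (d - 1)" using 2 by (intro H) auto
      also have "\<dots> \<le> Fp d" by (rule Fp_mono) simp
      finally show ?thesis .
    next
      case 3
      have "Fn (d + 1) \<le> Fn (2 + s)" by (rule Fn_le_Q)
      also have "\<dots> \<le> Fp 2" using P by simp
      also have "\<dots> = Fp d" using 3 Fp_sat[of d] by simp
      finally show ?thesis .
    qed
  qed
  then show ?thesis using P by simp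
qed

end



lemma sort_perm:
  fixes a :: "nat \<Rightarrow> real"
  assumes inj: "inj_on a {..<N}"
  shows "\<exists>\<pi>. bij_betw \<pi> {..<N} {..<N} \<and> (\<forall>p q. p < q \<longrightarrow> q < N \<longrightarrow> a (\<pi> p) < a (\<pi> q))"
proof -
  define A where "A = a ` {..<N}"
  define L where "L = sorted_list_of_set A"
  have fin: "finite A" unfolding A_def by simp
  have setL: "set L = A" unfolding L_def using fin by simp
  have lenL: "length L = N" unfolding L_def using fin inj by (simp add: A_def card_image)
  have sL: "sorted_wrt (<) L" unfolding L_def by (rule strict_sorted_list_of_set)
  have dL: "distinct L" unfolding L_def by simp
  define \<pi> where "\<pi> p = the_inv_into {..<N} a (L ! p)" for p
  have Lp: "L ! p \<in> a ` {..<N}" if "p < N" for p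
    using that lenL setL nth_mem[of p L] by (auto simp: A_def)
  have pin: "\<pi> p < N" if "p < N" for p
    using the_inv_into_into[OF inj Lp[OF that], of "{..<N}"] by (simp add: \<pi>_def)
  have api: "a (\<pi> p) = L ! p" if "p < N" for p
    using f_the_inv_into_f[OF inj Lp[OF that]] by (simp add: \<pi>_def)
  have mono: "a (\<pi> p) < a (\<pi> q)" if "p < q" "q < N" for p q
    using sorted_wrt_nth_less[OF sL that(1)] that lenL api by simp
  have injp: "inj_on \<pi> {..<N}"
  proof (rule inj_onI)
    fix p q assume pq: "p \<in> {..<N}" "q \<in> {..<N}" "\<pi> p = \<pi> q"
    then have "L ! p = L ! q" using api by (metis lessThan_iff)
    then show "p = q" using dL pq lenL nth_eq_iff_index_eq by auto
  qed
  have "\<pi> ` {..<N} = {..<N}"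
    by (rule endo_inj_surj) (use pin injp in auto)
  then have "bij_betw \<pi> {..<N} {..<N}" using injp by (simp add: bij_betw_def)
  then show ?thesis using mono by blast
qed


theorem mainTheorem14:
  fixes K :: "real \<Rightarrow> real" and r s :: real and N :: nat
    and Om :: "nat \<Rightarrow> real set"
  assumes K_meas: "K \<in> borel_measurable borel"
    and K_bdd: "bounded (range K)"
    and K_even: "\<And>x. K (- x) = K x"
    and s_pos: "s > 0"
    and hyp: "hyp_iii K s \<or> hyp_iv K s"
    and Om_int: "\<And>j. j < N \<Longrightarrow> is_interval (Om j)"
    and Om_sub: "\<And>j. j < N \<Longrightarrow> Om j \<subseteq> {-r..r}"
    and Om_disj: "\<And>j k. j < N \<Longrightarrow> k < N \<Longrightarrow> j \<noteq> k \<Longrightarrow> Om j \<inter> Om k = {}"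
    and Om_diam: "\<And>j. j < N \<Longrightarrow> diameter (Om j) > 4 + 2 * s"
    and Om_dist: "\<And>j k. j < N \<Longrightarrow> k < N \<Longrightarrow> j \<noteq> k \<Longrightarrow> setdist (Om j) (Om k) > 2"
  shows "\<forall>i :: nat \<Rightarrow> real. (\<forall>j<N. i j \<in> {-1, 1}) \<longrightarrow>
           (\<exists>u :: real \<Rightarrow> real. L2_on {-r..r} u \<and>
              (AE x in lborel. x \<in> {-r..r} \<longrightarrow> u x = sat (Top K {-r..r} u x)) \<and>
              (\<forall>j<N. AE x in lborel. x \<in> Om j \<longrightarrow> u x = i j))"
proof (intro allI impI)
  fix i :: "nat \<Rightarrow> real" assume isg: "\<forall>j<N. i j \<in> {-1, 1}"
  obtain B where B: "\<And>x. \<bar>K x\<bar> \<le> B"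
    using K_bdd unfolding bounded_iff by auto
  have hP: "supp (posp K) = {-2..2}" and hN: "supp (negp K) = {-2-s..-2} \<union> {2..2+s}"
    and hM: "antimono_on {0<..} (posp K)"
    using hyp by (auto simp: hyp_iii_def hyp_iv_def)
  have inP: "posp K x \<noteq> 0 \<Longrightarrow> x \<in> {-2..2}" for x
    using closure_subset[of "{x. posp K x \<noteq> 0}"] hP unfolding supp_def by auto
  have inN: "negp K x \<noteq> 0 \<Longrightarrow> x \<in> {-2-s..-2} \<union> {2..2+s}" for x
    using closure_subset[of "{x. negp K x \<noteq> 0}"] hN unfolding supp_def by auto
  interpret kern K s B
  proof
    show "K \<in> borel_measurable borel" by (rule K_meas)
    show "\<bar>K x\<bar> \<le> B" for x by (rule B)
    show "K (- x) = K x" for x by (rule K_even)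
    show "0 < s" by (rule s_pos)
    show "negp K x = 0" if "\<bar>x\<bar> < 2" for x using inN[of x] that by (cases "negp K x = 0") auto
    show "posp K x = 0" if "\<bar>x\<bar> > 2" for x using inP[of x] that by (cases "posp K x = 0") auto
    show "K x = 0" if "\<bar>x\<bar> > 2 + s" for x
    proof -
      have "posp K x = 0" using inP[of x] that s_pos by (cases "posp K x = 0") auto
      moreover have "negp K x = 0" using inN[of x] that by (cases "negp K x = 0") auto
      ultimately show ?thesis by (simp add: posp_def negp_def split: if_splits)
    qed
    show "posp K y \<le> posp K x" if "0 < x" "x \<le> y" for x y
      using hM that unfolding monotone_on_def by auto
  qed
  have key: "1 \<le> Fp 2 - Fn (2 + s) + (Fp d - Fn (d + 1))" if "0 \<le> d" for d
    using hyp
  proof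
    assume "hyp_iii K s"
    then have "Fp 2 \<ge> 1 + (LBINT x. negp K x)" unfolding hyp_iii_def using Fp_LBINT[of 2] by simp
    then show ?thesis using key_iii that by simp
  next
    assume h: "hyp_iv K s"
    have "Fp 2 \<ge> 1 + Fn (2 + s)" using h s_pos Fp_LBINT[of 2] Fn_LBINT[of s] unfolding hyp_iv_def by simp
    moreover have "Fn (2 + x) \<le> Fp x" if "0 \<le> x" "x \<le> 2" for x
    proof -
      have "\<forall>y\<in>{0..2::ereal}. (LBINT t=0..y. posp K t) \<ge> (LBINT t=2..2+y. negp K t)"
        using h unfolding hyp_iv_def by blast
      moreover have "ereal x \<in> {0..2::ereal}" using that by simp
      ultimately have "(LBINT t=0..ereal x. posp K t) \<ge> (LBINT t=2..2+ereal x. negp K t)" by blast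
      then show ?thesis using Fp_LBINT[of x] Fn_LBINT[of x] that by simp
    qed
    ultimately show ?thesis using key_iv that by simp
  qed
  show "\<exists>u. L2_on {-r..r} u \<and>
              (AE x in lborel. x \<in> {-r..r} \<longrightarrow> u x = sat (Top K {-r..r} u x)) \<and>
              (\<forall>j<N. AE x in lborel. x \<in> Om j \<longrightarrow> u x = i j)"
  proof (cases "N = 0")
    case True
    have L2: "L2_on {-r..r} (\<lambda>_. 0)" unfolding L2_on_def set_borel_measurable_def set_integrable_def by simp
    have "Top K {-r..r} (\<lambda>_. 0) x = 0" for x by (simp add: Top_def)
    then show ?thesis using True L2 by (intro exI[of _ "\<lambda>_. 0"]) (auto simp: sat_def)
  next
    case False
    then have Npos: "0 < N" by simp
    define a where "a j = Inf (Om j)" for j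
    define b where "b j = Sup (Om j)" for j
    have ne: "Om j \<noteq> {}" if "j < N" for j using Om_diam[OF that] s_pos by auto
    have bb: "bdd_below (Om j)" "bdd_above (Om j)" if "j < N" for j
      using Om_sub[OF that] by (meson atLeastAtMost_iff bdd_belowI subset_eq, meson atLeastAtMost_iff bdd_aboveI subset_eq)
    have sub: "Om j \<subseteq> {a j..b j}" if "j < N" for j
      using bb[OF that] by (auto simp: a_def b_def intro: cInf_lower cSup_upper)
    have ar: "-r \<le> a j" "b j \<le> r" if "j < N" for j
      using Om_sub[OF that] ne[OF that] unfolding a_def b_def
      by (auto intro!: cInf_greatest cSup_least)
    have len: "4 + 2 * s < b j - a j" if "j < N" for j
    proof -
      have "diameter (Om j) \<le> b j - a j"
      proof (rule diameter_le)
        show "Om j \<noteq> {} \<or> 0 \<le> b j - a j" using ne[OF that] by simp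
        fix x y assume "x \<in> Om j" "y \<in> Om j"
        then have "x \<in> {a j..b j}" "y \<in> {a j..b j}" using sub[OF that] by auto
        then show "norm (x - y) \<le> b j - a j" by auto
      qed
      then show ?thesis using Om_diam[OF that] by simp
    qed
    have opn: "{a j<..<b j} \<subseteq> Om j" if jN: "j < N" for j
    proof
      fix z assume z: "z \<in> {a j<..<b j}"
      obtain p where p: "p \<in> Om j" "p < z" using z cInf_less_iff[OF ne[OF jN] bb(1)[OF jN]] by (auto simp: a_def)
      obtain q where q: "q \<in> Om j" "z < q" using z less_cSup_iff[OF ne[OF jN] bb(2)[OF jN]] by (auto simp: b_def)
      have "\<forall>a\<in>Om j. \<forall>b\<in>Om j. \<forall>x. a \<le> x \<and> x \<le> b \<longrightarrow> x \<in> Om j"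
        using Om_int[OF jN] unfolding is_interval_1 .
      then show "z \<in> Om j" using p q by (meson less_imp_le)
    qed
    have cl: "a j \<in> closure (Om j)" "b j \<in> closure (Om j)" if "j < N" for j
      unfolding a_def b_def using ne[OF that] bb[OF that] by (auto intro: closure_contains_Inf closure_contains_Sup)
    have order: "b j + 2 < a k" if jk: "j < N" "k < N" "j \<noteq> k" "a j < a k" for j k
    proof -
      have "setdist (Om j) (Om k) \<le> dist (b j) (a k)"
        using setdist_le_dist[OF cl(2)[OF jk(1)] cl(1)[OF jk(2)]] by simp
      then have d: "2 < \<bar>b j - a k\<bar>" using Om_dist[OF jk(1-3)] by (simp add: dist_real_def)
      have "\<not> a k < b j"
      proof
        assume ak: "a k < b j"
        define z where "z = (a k + min (b j) (b k)) / 2"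
        have "z \<in> {a j<..<b j}" "z \<in> {a k<..<b k}" using ak jk(4) len[OF jk(2)] s_pos by (auto simp: z_def)
        then have "z \<in> Om j \<inter> Om k" using opn jk by blast
        then show False using Om_disj[OF jk(1-3)] by simp
      qed
      then show ?thesis using d by simp
    qed
    have inj: "inj_on a {..<N}"
    proof (rule inj_onI, rule ccontr)
      fix j k assume jk: "j \<in> {..<N}" "k \<in> {..<N}" "a j = a k" "j \<noteq> k"
      define z where "z = a j + 1"
      have l1: "4 + 2 * s < b j - a j" "4 + 2 * s < b k - a k" using len[of j] len[of k] jk(1,2) by auto
      have "z \<in> {a j<..<b j}" "z \<in> {a k<..<b k}" using jk(3) l1 s_pos by (auto simp: z_def)
      then have "z \<in> Om j \<inter> Om k" using opn jk by blast
      then show False using Om_disj jk by auto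
    qed
    obtain \<pi> where pi: "bij_betw \<pi> {..<N} {..<N}" and pim: "\<And>p q. p < q \<Longrightarrow> q < N \<Longrightarrow> a (\<pi> p) < a (\<pi> q)"
      using sort_perm[OF inj] by blast
    have pin: "\<pi> p < N" if "p < N" for p using pi that by (auto simp: bij_betw_def)
    have pinj: "\<pi> p \<noteq> \<pi> q" if "p < N" "q < N" "p \<noteq> q" for p q
      using pi that by (auto simp: bij_betw_def inj_on_def)
    obtain u where um: "u \<in> borel_measurable borel" and ub: "\<forall>x. \<bar>u x\<bar> \<le> 1"
      and ufix: "\<forall>x. -r \<le> x \<longrightarrow> x \<le> r \<longrightarrow> u x = sat (Top K {-r..r} u x)"
      and uOm: "\<forall>p<N. \<forall>x. (a \<circ> \<pi>) p \<le> x \<longrightarrow> x \<le> (b \<circ> \<pi>) p \<longrightarrow> u x = (i \<circ> \<pi>) p"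
    proof -
      have "\<exists>u. u \<in> borel_measurable borel \<and> (\<forall>x. \<bar>u x\<bar> \<le> 1)
         \<and> (\<forall>x. -r \<le> x \<longrightarrow> x \<le> r \<longrightarrow> u x = sat (Top K {-r..r} u x))
         \<and> (\<forall>j<N. \<forall>x. (a \<circ> \<pi>) j \<le> x \<longrightarrow> x \<le> (b \<circ> \<pi>) j \<longrightarrow> u x = (i \<circ> \<pi>) j)"
      proof (rule core_ex)
        show "0 < N" by (rule Npos)
        show "- r \<le> (a \<circ> \<pi>) j \<and> (b \<circ> \<pi>) j \<le> r \<and> 4 + 2 * s < (b \<circ> \<pi>) j - (a \<circ> \<pi>) j" if "j < N" for j
          using ar[OF pin[OF that]] len[OF pin[OF that]] by simp
        show "(b \<circ> \<pi>) j + 2 < (a \<circ> \<pi>) (Suc j)" if "Suc j < N" for j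
          using order[OF pin[of j] pin[OF that] pinj[of j "Suc j"] pim[of j "Suc j"]] that by simp
        show "(i \<circ> \<pi>) j = 1 \<or> (i \<circ> \<pi>) j = - 1" if "j < N" for j
          using isg pin[OF that] by auto
        show "1 \<le> Fp 2 - Fn (2 + s) + (Fp d - Fn (d + 1))" if "0 \<le> d" for d by (rule key[OF that])
      qed
      then show ?thesis using that by blast
    qed
    have L2: "L2_on {-r..r} u"
      unfolding L2_on_def set_borel_measurable_def set_integrable_def
    proof
      show "(\<lambda>x. indicator {- r..r} x *\<^sub>R u x) \<in> borel_measurable lborel" using um by measurable
      have i1: "integrable lborel (\<lambda>x. indicator {- r..r} x :: real)"
        by (simp add: integrable_indicator_iff emeasure_lborel_Icc_eq)
      have "AE x in lborel. norm (indicator {- r..r} x *\<^sub>R (u x)\<^sup>2) \<le> norm (indicator {- r..r} x :: real)"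
      proof (rule AE_I2)
        fix x
        have "\<bar>u x\<bar> ^ 2 \<le> 1" using ub[rule_format, of x] by (intro power_le_one) auto
        then have "(u x)\<^sup>2 \<le> 1" by simp
        then show "norm (indicator {- r..r} x *\<^sub>R (u x)\<^sup>2) \<le> norm (indicator {- r..r} x :: real)"
          by (auto simp: indicator_def)
      qed
      then show "integrable lborel (\<lambda>x. indicator {- r..r} x *\<^sub>R (u x)\<^sup>2)"
        using Bochner_Integration.integrable_bound[OF i1, of "\<lambda>x. indicator {- r..r} x *\<^sub>R (u x)\<^sup>2"] um by simp
    qed
    have AE1: "AE x in lborel. x \<in> {-r..r} \<longrightarrow> u x = sat (Top K {-r..r} u x)"
      using ufix by auto
    have AE2: "\<forall>j<N. AE x in lborel. x \<in> Om j \<longrightarrow> u x = i j"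
    proof (intro allI impI AE_I2)
      fix j x assume j: "j < N" and "x \<in> Om j"
      have "j \<in> \<pi> ` {..<N}" using pi j unfolding bij_betw_def by auto
      then obtain p where p: "p < N" "\<pi> p = j" by auto
      have "a j \<le> x" "x \<le> b j" using sub[OF j] \<open>x \<in> Om j\<close> by auto
      then show "u x = i j" using uOm p by auto
    qed
    show ?thesis using L2 AE1 AE2 by blast
  qed
qed


end
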